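(* Fix $B>1$ and $\alpha>0$. For a block $A$ (a map between real vector spaces) with approximation $A^\alpha$, let $$E_A^\alpha(e)=\sup_{\|\mathbf{x}+\mathbf{e}\|_\infty\le B,\ \|\mathbf{e}\|_\infty\le e}\|A^\alpha(\mathbf{x}+\mathbf{e})-A(\mathbf{x})\|_\infty .$$ Then for every $e\ge0$: (a) If $A$ is a linear block $A(\mathbf{x})=\mathbf{A}\mathbf{x}+\mathbf{b}$ with $A^\alpha=A$, then $E_A^\alpha(e)\le\|\mathbf{A}\|_\infty e$, where $\|\mathbf{A}\|_\infty$ is the matrix infinity norm (maximum absolute row sum). (b) If $A$ is a ReLU block (coordinatewise $\mathrm{ReLU}(x)=\max(x,0)$) and $A^\alpha$ applies $\tilde r_{\alpha,B}$ coordinatewise, then $E_A^\alpha(e)\le B2^{-\alpha}+e$. (c) If $A$ is a max-pooling block with kernel size $k_0\le 10$ (each output coordinate is the maximum of a window of $k_0^2$ input coordinates), $A^\alpha$ replaces each such maximum by $\tilde M_{\alpha,k_0^2,B}$ applied to the same window, and $\alpha\ge 4$, then $E_A^\alpha(e)\le 10B\lceil\log_2 k_0^2\rceil 2^{-\alpha}+e$. (d) If $A$ is a softmax block $A(\mathbf{x})=\big(\exp(x_i)/\sum_j\exp(x_j)\big)_{1\le i\le N}$ with $A^\alpha=A$, then $E_A^\alpha(e)\le e/2$.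
   Context: Let $p_\alpha$ be a polynomial such that $m_\alpha(a,b)=\frac{(a+b)+(a-b)p_\alpha(a-b)}{2}$ satisfies $|m_\alpha(a,b)-\max(a,b)|\le2^{-\alpha}$ for all $a,b\in[0,1]$. Define $r_\alpha(x)=\frac{x+xp_\alpha(x)}{2}$ and $\tilde r_{\alpha,B}(x)=B\,r_\alpha(x/B)$. Define $M_{\alpha,1}(x_1)=x_1$, $M_{\alpha,2k}(x_1,\dots,x_{2k})=m_\alpha(M_{\alpha,k}(x_1,\dots,x_k),M_{\alpha,k}(x_{k+1},\dots,x_{2k}))$, $M_{\alpha,2k+1}(x_1,\dots,x_{2k+1})=m_\alpha(M_{\alpha,k}(x_1,\dots,x_k),M_{\alpha,k+1}(x_{k+1},\dots,x_{2k+1}))$, and $$\tilde M_{\alpha,n,B}(x_1,\dots,x_n)=B'\Big(M_{\alpha,n}\big(\tfrac{x_1}{B'}+0.5,\dots,\tfrac{x_n}{B'}+0.5\big)-0.5\Big),\quad B'=\frac{B}{0.5-(\lceil\log_2 n\rceil-1)2^{-\alpha}}.$$ *)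

theory Defs
  imports "HOL-Analysis.Analysis" "HOL-Computational_Algebra.Polynomial"
begin

text \<open>Polynomial approximation of max: m_alpha(a,b) = ((a+b) + (a-b) p(a-b))/2.\<close>
definition malpha :: "real poly \<Rightarrow> real \<Rightarrow> real \<Rightarrow> real" where
  "malpha p a b = ((a + b) + (a - b) * poly p (a - b)) / 2"

definition ralpha :: "real poly \<Rightarrow> real \<Rightarrow> real" where
  "ralpha p x = (x + x * poly p x) / 2"

definition rtilde :: "real poly \<Rightarrow> real \<Rightarrow> real \<Rightarrow> real" where
  "rtilde p B x = B * ralpha p (x / B)"

text \<open>Tree of m_alpha's: M_1(x)=x, M_n splits into the first floor(n/2) and the
  remaining ceil(n/2) arguments (this covers both the 2k and 2k+1 cases).
  The value on the empty list is an irrelevant default.\<close>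
function Mtree :: "real poly \<Rightarrow> real list \<Rightarrow> real" where
  "Mtree p xs = (if length xs \<le> 1 then (if xs = [] then 0 else hd xs)
     else malpha p (Mtree p (take (length xs div 2) xs)) (Mtree p (drop (length xs div 2) xs)))"
  by auto
termination
  by (relation "Wellfounded.measure (\<lambda>(p, xs). length xs)") auto

declare Mtree.simps[simp del]

definition Mtilde :: "real poly \<Rightarrow> real \<Rightarrow> nat \<Rightarrow> real \<Rightarrow> real list \<Rightarrow> real" where
  "Mtilde p \<alpha> n B xs =
     (let B' = B / (0.5 - (real_of_int \<lceil>log 2 (real n)\<rceil> - 1) * 2 powr (-\<alpha>))
      in B' * (Mtree p (map (\<lambda>x. x / B' + 0.5) xs) - 0.5))"

definition matinfnorm :: "real^'n^'m \<Rightarrow> real" where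
  "matinfnorm M = Max (range (\<lambda>i. \<Sum>j\<in>UNIV. \<bar>M $ i $ j\<bar>))"

definition blockerr :: "real \<Rightarrow> (real^'n \<Rightarrow> real^'m) \<Rightarrow> (real^'n \<Rightarrow> real^'m) \<Rightarrow> real \<Rightarrow> ereal" where
  "blockerr B A Aa e = Sup {ereal (infnorm (Aa (x + d) - A x)) | x d.
       infnorm (x + d) \<le> B \<and> infnorm d \<le> e}"

end

theory Submission
  imports Defs
begin


lemma infnorm_le_cart:
  fixes x :: "real^'n"
  assumes "\<And>i. \<bar>x$i\<bar> \<le> c"
  shows "infnorm x \<le> c"
  unfolding infnorm_cart by (rule cSup_least) (use assms in auto)

lemma blockerr_le:
  assumes "\<And>x d i. infnorm (x + d) \<le> B \<Longrightarrow> infnorm d \<le> e \<Longrightarrow> \<bar>(Aa (x + d) - A x) $ i\<bar> \<le> c"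
  shows "blockerr B A Aa e \<le> ereal c"
  unfolding blockerr_def
  by (rule Sup_least) (auto intro!: infnorm_le_cart assms)

lemma part_a:
  fixes M :: "real^'n^'m" and b :: "real^'m"
  assumes "e \<ge> 0"
  shows "blockerr B (\<lambda>x. M *v x + b) (\<lambda>x. M *v x + b) e \<le> ereal (matinfnorm M * e)"
proof (rule blockerr_le)
  fix x d :: "real^'n" and i
  assume "infnorm d \<le> e"
  hence de: "\<bar>d$j\<bar> \<le> e" for j using component_le_infnorm_cart[of d j] by linarith
  have "(M *v (x + d) + b - (M *v x + b)) $ i = (M *v d) $ i"
    by (simp add: matrix_vector_right_distrib)
  also have "\<dots> = (\<Sum>j\<in>UNIV. M$i$j * d$j)" by (simp add: matrix_vector_mult_def)
  finally have "\<bar>(M *v (x + d) + b - (M *v x + b)) $ i\<bar> \<le> (\<Sum>j\<in>UNIV. \<bar>M$i$j\<bar> * e)"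
    by (auto intro!: order.trans[OF sum_abs] sum_mono mult_left_mono de simp: abs_mult)
  also have "\<dots> = (\<Sum>j\<in>UNIV. \<bar>M$i$j\<bar>) * e" by (simp add: sum_distrib_right)
  also have "\<dots> \<le> matinfnorm M * e"
    unfolding matinfnorm_def by (rule mult_right_mono) (auto intro!: Max_ge simp: assms)
  finally show "\<bar>(M *v (x + d) + b - (M *v x + b)) $ i\<bar> \<le> matinfnorm M * e" .
qed

lemma r_approx:
  assumes "\<forall>a\<in>{0..1}. \<forall>b\<in>{0..1}. \<bar>malpha p a b - max a b\<bar> \<le> 2 powr (-\<alpha>)"
    and "\<bar>t\<bar> \<le> 1"
  shows "\<bar>ralpha p t - max t 0\<bar> \<le> 2 powr (-\<alpha>)"
proof (cases "t \<ge> 0")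
  case True
  have "t \<in> {0..1}" "(0::real) \<in> {0..1}" using True assms(2) by auto
  with assms(1) have "\<bar>malpha p t 0 - max t 0\<bar> \<le> 2 powr (-\<alpha>)" by blast
  thus ?thesis by (simp add: malpha_def ralpha_def)
next
  case False
  have "-t \<in> {0..1}" "(0::real) \<in> {0..1}" using False assms(2) by auto
  with assms(1) have "\<bar>malpha p 0 (-t) - max 0 (-t)\<bar> \<le> 2 powr (-\<alpha>)" by blast
  moreover have "malpha p 0 (-t) = ralpha p t - t" by (simp add: malpha_def ralpha_def field_simps)
  ultimately show ?thesis using False by auto
qed

lemma part_b:
  assumes "B > 1" and p: "\<forall>a\<in>{0..1}. \<forall>b\<in>{0..1}. \<bar>malpha p a b - max a b\<bar> \<le> 2 powr (-\<alpha>)"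
  shows "blockerr B (\<lambda>x :: real^'k. \<chi> i. max (x $ i) 0) (\<lambda>x. \<chi> i. rtilde p B (x $ i)) e
       \<le> ereal (B * 2 powr (-\<alpha>) + e)"
proof (rule blockerr_le)
  fix x d :: "real^'k" and i
  assume B: "infnorm (x + d) \<le> B" and "infnorm d \<le> e"
  hence de: "\<bar>d$i\<bar> \<le> e" using component_le_infnorm_cart[of d i] by linarith
  have y: "\<bar>(x+d)$i\<bar> \<le> B" using component_le_infnorm_cart[of "x+d" i] B by linarith
  define t where "t = (x$i + d$i) / B"
  have "\<bar>t\<bar> \<le> 1" using y assms(1) by (simp add: t_def abs_divide)
  from r_approx[OF p this] have "\<bar>B * ralpha p t - B * max t 0\<bar> \<le> B * 2 powr (-\<alpha>)"
    using assms(1) by (simp add: abs_mult flip: right_diff_distrib)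
  moreover have "B * max t 0 = max (x$i + d$i) 0" using assms(1)
    by (simp add: t_def max_def field_simps)
  ultimately have "\<bar>rtilde p B (x$i + d$i) - max (x$i + d$i) 0\<bar> \<le> B * 2 powr (-\<alpha>)"
    by (simp add: rtilde_def t_def)
  moreover have "\<bar>max (x$i + d$i) 0 - max (x$i) 0\<bar> \<le> e" using de by (auto simp: max_def)
  ultimately show "\<bar>((\<chi> i. rtilde p B ((x + d) $ i)) - (\<chi> i. max (x $ i) 0)) $ i\<bar> \<le> B * 2 powr (-\<alpha>) + e"
    by simp
qed



definition sig :: "real \<Rightarrow> real" where "sig t = 1 / (1 + exp (-t))"

lemma sig_lip_aux:
  assumes "a < b" shows "\<bar>sig b - sig a\<bar> \<le> (b - a) / 4"
proof -
  have D: "DERIV sig x :> exp (-x) / (1 + exp (-x))^2" for x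
    unfolding sig_def
    by (auto intro!: derivative_eq_intros simp: power2_eq_square add_pos_pos)
       (smt (verit) exp_gt_zero)
  obtain z where z: "sig b - sig a = (b - a) * (exp (-z) / (1 + exp (-z))^2)"
    using MVT2[OF assms, of sig "\<lambda>x. exp (-x) / (1 + exp (-x))^2"] D by blast
  have q: "exp (-z) / (1 + exp (-z))^2 \<le> 1/4"
  proof -
    have "4 * exp (-z) \<le> (1 + exp (-z))^2"
      using sum_squares_ge_zero[of "1 - exp (-z)" 0] by (simp add: power2_eq_square algebra_simps)
    thus ?thesis by (simp add: divide_simps)
  qed
  have "0 \<le> exp (-z) / (1 + exp (-z))^2" by simp
  hence "(b - a) * (exp (-z) / (1 + exp (-z))^2) \<le> (b - a) * (1/4)"
    using q assms by (intro mult_left_mono) auto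
  thus ?thesis using z assms \<open>0 \<le> exp (-z) / (1 + exp (-z))^2\<close> by simp
qed

lemma sig_lip: "\<bar>sig b - sig a\<bar> \<le> \<bar>b - a\<bar> / 4"
proof -
  consider "a < b" | "a = b" | "b < a" by linarith
  thus ?thesis
  proof cases
    case 3 thus ?thesis using sig_lip_aux[OF 3] by (simp add: abs_minus_commute)
  qed (use sig_lip_aux in auto)
qed

lemma softmax_coord:
  fixes x d :: "real^'s"
  assumes "\<And>j. \<bar>d$j\<bar> \<le> e"
  shows "\<bar>exp (x$i + d$i) / (\<Sum>j\<in>UNIV. exp (x$j + d$j)) - exp (x$i) / (\<Sum>j\<in>UNIV. exp (x$j))\<bar> \<le> e / 2"
proof -
  have e0: "e \<ge> 0" using assms[of i] by linarith
  have split: "(\<Sum>j\<in>UNIV. f j) = f i + (\<Sum>j\<in>UNIV-{i}. f j)" for f :: "'s \<Rightarrow> real"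
    by (simp add: sum.remove)
  show ?thesis
  proof (cases "UNIV - {i} = {}")
    case True
    thus ?thesis using e0 by (simp add: split True)
  next
    case False
    define C where "C y = (\<Sum>j\<in>UNIV-{i}. exp (y j))" for y :: "'s \<Rightarrow> real"
    have Cpos: "C y > 0" for y unfolding C_def using False by (intro sum_pos) auto
    have sm: "exp (y i) / (\<Sum>j\<in>UNIV. exp (y j)) = sig (y i - ln (C y))" for y :: "'s \<Rightarrow> real"
    proof -
      have e1: "exp (ln (C y) - y i) = C y / exp (y i)"
        using Cpos[of y] by (simp add: exp_diff)
      have "exp (y i) / (exp (y i) + C y) = 1 / (1 + C y / exp (y i))"
        using Cpos[of y] by (simp add: field_simps)
      thus ?thesis unfolding sig_def split[of "\<lambda>j. exp (y j)"] C_def[symmetric]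
        using e1 by simp
    qed
    let ?y = "\<lambda>j. x$j + d$j" and ?x = "\<lambda>j. x$j"
    have c1: "C ?y \<le> exp e * C ?x"
      unfolding C_def sum_distrib_left
      by (rule sum_mono) (use assms in \<open>auto simp: mult_exp_exp abs_le_iff simp flip: exp_add\<close>)
    have c2: "C ?x \<le> exp e * C ?y"
      unfolding C_def sum_distrib_left
      proof (rule sum_mono)
        fix j
        have "x$j \<le> e + (x$j + d$j)" using assms[of j] by linarith
        thus "exp (x$j) \<le> exp e * exp (x$j + d$j)" by (simp flip: exp_add)
      qed
    have l1: "ln (C ?y) \<le> e + ln (C ?x)"
    proof -
      have "ln (C ?y) \<le> ln (exp e * C ?x)" using c1 Cpos[of ?y] by simp
      also have "\<dots> = e + ln (C ?x)" using Cpos[of ?x] by (simp add: ln_mult)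
      finally show ?thesis .
    qed
    have l2: "ln (C ?x) \<le> e + ln (C ?y)"
    proof -
      have "ln (C ?x) \<le> ln (exp e * C ?y)" using c2 Cpos[of ?x] by simp
      also have "\<dots> = e + ln (C ?y)" using Cpos[of ?y] by (simp add: ln_mult)
      finally show ?thesis .
    qed
    have "\<bar>(?y i - ln (C ?y)) - (?x i - ln (C ?x))\<bar> \<le> 2 * e"
      using l1 l2 assms[of i] by auto
    hence "\<bar>sig (?y i - ln (C ?y)) - sig (?x i - ln (C ?x))\<bar> \<le> e / 2"
      using sig_lip[of "?y i - ln (C ?y)" "?x i - ln (C ?x)"] by (simp add: field_simps)
    thus ?thesis using sm[of ?y] sm[of ?x] by simp
  qed
qed

lemma part_d:
  "blockerr B (\<lambda>x :: real^'s. \<chi> i. exp (x $ i) / (\<Sum>j\<in>UNIV. exp (x $ j)))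
                        (\<lambda>x. \<chi> i. exp (x $ i) / (\<Sum>j\<in>UNIV. exp (x $ j))) e
       \<le> ereal (e / 2)"
proof (rule blockerr_le)
  fix x d :: "real^'s" and i
  assume "infnorm d \<le> e"
  hence de: "\<bar>d$j\<bar> \<le> e" for j using component_le_infnorm_cart[of d j] by linarith
  show "\<bar>((\<chi> i. exp ((x + d) $ i) / (\<Sum>j\<in>UNIV. exp ((x + d) $ j))) -
          (\<chi> i. exp (x $ i) / (\<Sum>j\<in>UNIV. exp (x $ j)))) $ i\<bar> \<le> e / 2"
    using softmax_coord[of d e x i, OF de] by simp
qed



lemma Mtree_single: "length xs = 1 \<Longrightarrow> Mtree p xs = hd xs"
  by (subst Mtree.simps) auto

lemma Max_set_bounds:
  assumes "xs \<noteq> []" "\<forall>x\<in>set xs. a \<le> x \<and> x \<le> b"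
  shows "a \<le> Max (set xs) \<and> Max (set xs) \<le> b"
  using assms by (metis List.finite_set Max_in set_empty)

lemma Mtree_approx:
  assumes p: "\<forall>a\<in>{0..1}. \<forall>b\<in>{0..1}. \<bar>malpha p a b - max a b\<bar> \<le> \<epsilon>"
    and eps: "\<epsilon> \<ge> 0"
  shows "1 \<le> length xs \<Longrightarrow> length xs \<le> 2^k \<Longrightarrow> (\<forall>x\<in>set xs. c \<le> x \<and> x \<le> 1 - c)
     \<Longrightarrow> (real k - 1) * \<epsilon> \<le> c \<Longrightarrow> \<bar>Mtree p xs - Max (set xs)\<bar> \<le> real k * \<epsilon>"
proof (induction k arbitrary: xs)
  case 0
  then obtain a where "xs = [a]" by (cases xs) auto
  thus ?case by (simp add: Mtree_single)
next
  case (Suc k)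
  show ?case
  proof (cases "length xs = 1")
    case True
    then obtain a where "xs = [a]" by (cases xs) auto
    thus ?thesis using eps by (simp add: Mtree_single)
  next
    case False
    define m where "m = length xs"
    have m2: "m \<ge> 2" using False Suc.prems(1) m_def by linarith
    define ys where "ys = take (m div 2) xs"
    define zs where "zs = drop (m div 2) xs"
    have Mt: "Mtree p xs = malpha p (Mtree p ys) (Mtree p zs)"
      using m2 unfolding ys_def zs_def m_def by (subst Mtree.simps) auto
    have ly: "1 \<le> length ys" "length ys \<le> 2^k" using m2 Suc.prems(2) unfolding ys_def m_def by auto
    have lz: "1 \<le> length zs" "length zs \<le> 2^k" using m2 Suc.prems(2) unfolding zs_def m_def by auto
    have sy: "set ys \<subseteq> set xs" unfolding ys_def by (rule set_take_subset)
    have sz: "set zs \<subseteq> set xs" unfolding zs_def by (rule set_drop_subset)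
    have bdy: "\<forall>x\<in>set ys. c \<le> x \<and> x \<le> 1 - c" using sy Suc.prems(3) by blast
    have bdz: "\<forall>x\<in>set zs. c \<le> x \<and> x \<le> 1 - c" using sz Suc.prems(3) by blast
    have ck: "real k * \<epsilon> \<le> c" using Suc.prems(4) by simp
    have ck': "(real k - 1) * \<epsilon> \<le> c" using ck eps by (smt (verit) mult_right_mono)
    have IHy: "\<bar>Mtree p ys - Max (set ys)\<bar> \<le> real k * \<epsilon>" using Suc.IH[OF ly bdy ck'] .
    have IHz: "\<bar>Mtree p zs - Max (set zs)\<bar> \<le> real k * \<epsilon>" using Suc.IH[OF lz bdz ck'] .
    have yne: "ys \<noteq> []" and zne: "zs \<noteq> []" using ly lz by auto
    have By: "c \<le> Max (set ys) \<and> Max (set ys) \<le> 1 - c" using Max_set_bounds[OF yne bdy] .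
    have Bz: "c \<le> Max (set zs) \<and> Max (set zs) \<le> 1 - c" using Max_set_bounds[OF zne bdz] .
    have u01: "Mtree p ys \<in> {0..1}" using IHy By ck by auto
    have v01: "Mtree p zs \<in> {0..1}" using IHz Bz ck by auto
    have e1: "\<bar>malpha p (Mtree p ys) (Mtree p zs) - max (Mtree p ys) (Mtree p zs)\<bar> \<le> \<epsilon>"
      using p u01 v01 by blast
    have "xs = ys @ zs" unfolding ys_def zs_def by simp
    hence Mx: "Max (set xs) = max (Max (set ys)) (Max (set zs))"
      using yne zne by (simp add: Max_Un)
    have e2: "\<bar>max (Mtree p ys) (Mtree p zs) - max (Max (set ys)) (Max (set zs))\<bar> \<le> real k * \<epsilon>"
      using IHy IHz by (auto simp: max_def abs_le_iff)
    show ?thesis using e1 e2 unfolding Mt Mx by (simp add: algebra_simps)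
  qed
qed

lemma Mtilde_approx:
  assumes p: "\<forall>a\<in>{0..1}. \<forall>b\<in>{0..1}. \<bar>malpha p a b - max a b\<bar> \<le> 2 powr (-\<alpha>)"
    and B: "B > 0" and al: "\<alpha> \<ge> 4" and n: "1 \<le> n" "n \<le> 100"
    and len: "length ys = n" and yb: "\<forall>y\<in>set ys. \<bar>y\<bar> \<le> B"
  shows "\<bar>Mtilde p \<alpha> n B ys - Max (set ys)\<bar> \<le> 10 * B * real_of_int \<lceil>log 2 (real n)\<rceil> * 2 powr (-\<alpha>)"
proof -
  define \<epsilon> where "\<epsilon> = (2::real) powr (-\<alpha>)"
  have eps0: "\<epsilon> \<ge> 0" unfolding \<epsilon>_def by simp
  have eps16: "\<epsilon> \<le> 1/16"
  proof -
    have "\<epsilon> \<le> 2 powr (-4)" unfolding \<epsilon>_def using al by (intro powr_mono) auto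
    thus ?thesis by (simp add: powr_minus)
  qed
  define L where "L = \<lceil>log 2 (real n)\<rceil>"
  have "log 2 (real n) \<ge> 0" using n by simp
  hence L0: "L \<ge> 0" unfolding L_def by simp
  have L7: "L \<le> 7"
  proof -
    have "log 2 (real n) \<le> real 7" using n by (intro log2_of_power_le) auto
    thus ?thesis unfolding L_def by linarith
  qed
  define k where "k = nat L"
  have kL: "real k = real_of_int L" unfolding k_def using L0 by simp
  have nk: "n \<le> 2^k"
  proof -
    have "log 2 (real n) \<le> real k" using kL unfolding L_def by linarith
    hence "real n \<le> 2 powr real k" using n by (subst (asm) log_le_iff) auto
    hence "real n \<le> 2 ^ k" by (simp add: powr_realpow)
    thus ?thesis by (metis of_nat_le_iff of_nat_numeral of_nat_power)
  qed
  define den where "den = 0.5 - (real_of_int L - 1) * \<epsilon>"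
  have den8: "den \<ge> 1/8"
  proof -
    have "(real_of_int L - 1) * \<epsilon> \<le> 6 * (1/16)"
    proof (cases "L \<ge> 1")
      case True
      thus ?thesis using L7 eps16 eps0 by (intro mult_mono) auto
    next
      case False
      hence "real_of_int L - 1 \<le> 0" by simp
      hence "(real_of_int L - 1) * \<epsilon> \<le> 0" using eps0 by (simp add: mult_nonpos_nonneg)
      thus ?thesis by simp
    qed
    thus ?thesis unfolding den_def by simp
  qed
  define B' where "B' = B / den"
  have B'pos: "B' > 0" unfolding B'_def using B den8 by simp
  have B'8: "B' \<le> 8 * B"
  proof -
    have "B / den \<le> B / (1/8)" using B den8 by (intro divide_left_mono) auto
    thus ?thesis unfolding B'_def by simp
  qed
  have Mt: "Mtilde p \<alpha> n B ys = B' * (Mtree p (map (\<lambda>x. x / B' + 0.5) ys) - 0.5)"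
    unfolding Mtilde_def B'_def den_def L_def \<epsilon>_def by (simp add: Let_def)
  define zs where "zs = map (\<lambda>x. x / B' + 0.5) ys"
  define c where "c = (real k - 1) * \<epsilon>"
  have cden: "c = 0.5 - den" unfolding c_def den_def kL by simp
  have zb: "\<forall>z\<in>set zs. c \<le> z \<and> z \<le> 1 - c"
  proof
    fix z assume "z \<in> set zs"
    then obtain y where y: "y \<in> set ys" "z = y / B' + 0.5" unfolding zs_def by auto
    have "\<bar>y\<bar> \<le> B" using yb y(1) by blast
    hence "\<bar>y\<bar> * den \<le> B * den" using den8 by (intro mult_right_mono) auto
    hence "\<bar>y / B'\<bar> \<le> den"
      using B'pos B den8 unfolding B'_def by (simp add: abs_divide abs_mult field_simps)
    hence "-den \<le> y / B' \<and> y / B' \<le> den" unfolding abs_le_iff by linarith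
    thus "c \<le> z \<and> z \<le> 1 - c" using y(2) cden by linarith
  qed
  have lz: "1 \<le> length zs" "length zs \<le> 2^k" using len n nk unfolding zs_def by auto
  have approx: "\<bar>Mtree p zs - Max (set zs)\<bar> \<le> real k * \<epsilon>"
    using Mtree_approx[OF p[folded \<epsilon>_def] eps0 lz zb] c_def by simp
  have yne: "ys \<noteq> []" using len n by auto
  have mono: "mono (\<lambda>x. x / B' + 0.5)" using B'pos by (auto intro!: monoI simp: divide_right_mono)
  have MZ: "Max (set zs) = Max (set ys) / B' + 0.5"
    unfolding zs_def set_map using mono_Max_commute[OF mono, of "set ys"] yne by simp
  have "Mtilde p \<alpha> n B ys - Max (set ys) = B' * (Mtree p zs - Max (set zs))"
    unfolding Mt zs_def[symmetric] MZ using B'pos by (simp add: field_simps)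
  hence "\<bar>Mtilde p \<alpha> n B ys - Max (set ys)\<bar> \<le> B' * (real k * \<epsilon>)"
    using approx B'pos by (simp add: abs_mult mult_left_mono)
  also have "\<dots> \<le> (8 * B) * (real k * \<epsilon>)"
    using B'8 eps0 by (intro mult_right_mono) auto
  also have "\<dots> \<le> (10 * B) * (real k * \<epsilon>)"
    using B eps0 by (intro mult_right_mono) auto
  finally show ?thesis unfolding kL \<epsilon>_def L_def by (simp add: mult.assoc)
qed

lemma Max_diff_le:
  fixes f g :: "'a \<Rightarrow> real"
  assumes "finite A" "A \<noteq> {}" "\<And>a. a \<in> A \<Longrightarrow> \<bar>f a - g a\<bar> \<le> e"
  shows "\<bar>Max (f ` A) - Max (g ` A)\<bar> \<le> e"
proof -
  obtain a where a: "a \<in> A" "Max (f ` A) = f a" using assms(1,2)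
    by (metis (mono_tags, lifting) Max_in finite_imageI image_iff image_is_empty)
  obtain b where b: "b \<in> A" "Max (g ` A) = g b" using assms(1,2)
    by (metis (mono_tags, lifting) Max_in finite_imageI image_iff image_is_empty)
  have "g a \<le> Max (g ` A)" using a assms by auto
  moreover have "f b \<le> Max (f ` A)" using b assms by auto
  ultimately show ?thesis using assms(3)[OF a(1)] assms(3)[OF b(1)] a b by (auto simp: abs_le_iff)
qed

lemma part_c:
  fixes win :: "'q::finite \<Rightarrow> nat \<Rightarrow> 'r::finite"
  assumes p: "\<forall>a\<in>{0..1}. \<forall>b\<in>{0..1}. \<bar>malpha p a b - max a b\<bar> \<le> 2 powr (-\<alpha>)"
    and B: "B > 1" and k: "1 \<le> k0" "k0 \<le> 10" and al: "\<alpha> \<ge> 4"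
  shows "blockerr B (\<lambda>x. \<chi> i. Max {x $ win i j | j. j < k0^2})
                  (\<lambda>x. \<chi> i. Mtilde p \<alpha> (k0^2) B (map (\<lambda>j. x $ win i j) [0..<k0^2])) e
       \<le> ereal (10 * B * real_of_int \<lceil>log 2 (real (k0^2))\<rceil> * 2 powr (-\<alpha>) + e)"
proof (rule blockerr_le)
  fix x d :: "real^'r" and i
  assume xd: "infnorm (x + d) \<le> B" and "infnorm d \<le> e"
  hence de: "\<bar>d$j\<bar> \<le> e" for j using component_le_infnorm_cart[of d j] by linarith
  have yb: "\<bar>(x+d)$j\<bar> \<le> B" for j using component_le_infnorm_cart[of "x+d" j] xd by linarith
  define n where "n = k0^2"
  have n: "1 \<le> n" "n \<le> 100" unfolding n_def using k
    using mult_le_mono[of k0 10 k0 10] by (simp_all add: power2_eq_square)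
  define ys where "ys = map (\<lambda>j. (x+d) $ win i j) [0..<n]"
  have "\<bar>Mtilde p \<alpha> n B ys - Max (set ys)\<bar> \<le> 10 * B * real_of_int \<lceil>log 2 (real n)\<rceil> * 2 powr (-\<alpha>)"
    by (rule Mtilde_approx[OF p _ al n]) (use B yb in \<open>auto simp: ys_def\<close>)
  moreover have "set ys = (\<lambda>j. (x+d) $ win i j) ` {..<n}" unfolding ys_def by auto
  moreover have "{x $ win i j | j. j < n} = (\<lambda>j. x $ win i j) ` {..<n}" by auto
  moreover have "\<bar>Max ((\<lambda>j. (x+d) $ win i j) ` {..<n}) - Max ((\<lambda>j. x $ win i j) ` {..<n})\<bar> \<le> e"
  proof (rule Max_diff_le)
    show "{..<n} \<noteq> {}" using n by (metis lessThan_iff less_le_trans empty_iff zero_less_one)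
  qed (use de in auto)
  ultimately have "\<bar>Mtilde p \<alpha> n B ys - Max {x $ win i j | j. j < n}\<bar>
      \<le> 10 * B * real_of_int \<lceil>log 2 (real n)\<rceil> * 2 powr (-\<alpha>) + e"
    by (simp only:)
  thus "\<bar>((\<chi> i. Mtilde p \<alpha> (k0^2) B (map (\<lambda>j. (x + d) $ win i j) [0..<k0^2])) -
          (\<chi> i. Max {x $ win i j | j. j < k0^2})) $ i\<bar>
       \<le> 10 * B * real_of_int \<lceil>log 2 (real (k0^2))\<rceil> * 2 powr (-\<alpha>) + e"
    unfolding n_def ys_def by simp
qed


theorem lemma1:
  fixes B \<alpha> :: real and p :: "real poly"
  assumes "B > 1" and "\<alpha> > 0"
    and "\<forall>a\<in>{0..1}. \<forall>b\<in>{0..1}. \<bar>malpha p a b - max a b\<bar> \<le> 2 powr (-\<alpha>)"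
  shows
   "(\<forall>(M :: real^'n^'m) (b :: real^'m) e. e \<ge> 0 \<longrightarrow>
       blockerr B (\<lambda>x. M *v x + b) (\<lambda>x. M *v x + b) e \<le> ereal (matinfnorm M * e))
  \<and> (\<forall>e \<ge> 0. blockerr B (\<lambda>x :: real^'k. \<chi> i. max (x $ i) 0) (\<lambda>x. \<chi> i. rtilde p B (x $ i)) e
       \<le> ereal (B * 2 powr (-\<alpha>) + e))
  \<and> (\<forall>(k0 :: nat) (win :: 'q::finite \<Rightarrow> nat \<Rightarrow> 'r::finite) e.
       1 \<le> k0 \<longrightarrow> k0 \<le> 10 \<longrightarrow> \<alpha> \<ge> 4 \<longrightarrow> e \<ge> 0 \<longrightarrow>
       (\<forall>i. inj_on (win i) {..<k0^2}) \<longrightarrow>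
       blockerr B (\<lambda>x. \<chi> i. Max {x $ win i j | j. j < k0^2})
                  (\<lambda>x. \<chi> i. Mtilde p \<alpha> (k0^2) B (map (\<lambda>j. x $ win i j) [0..<k0^2])) e
       \<le> ereal (10 * B * real_of_int \<lceil>log 2 (real (k0^2))\<rceil> * 2 powr (-\<alpha>) + e))
  \<and> (\<forall>e \<ge> 0. blockerr B (\<lambda>x :: real^'s. \<chi> i. exp (x $ i) / (\<Sum>j\<in>UNIV. exp (x $ j)))
                        (\<lambda>x. \<chi> i. exp (x $ i) / (\<Sum>j\<in>UNIV. exp (x $ j))) e
       \<le> ereal (e / 2))"
proof -
  have B0: "B > 0" using assms(1) by simp
  show ?thesis
    using part_a part_b[OF assms(1) assms(3)] part_c[OF assms(3) assms(1)] part_d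
    by blast
qed

end
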